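(* Let $D\subseteq\mathbb{R}^s$ be closed and $\bar y\in D$. Then for every integer $l\ge1$ and every collection of directions $v_1,\dots,v_l\in\mathbb{R}^s$ we have \[\widehat N_{T^{l-1}_D(\bar y;v_1,\dots,v_{l-1})}(v_l)\subseteq N_{T^{l-1}_D(\bar y;v_1,\dots,v_{l-1})}(v_l)\subseteq N_{T_D(\bar y)}(0)\subseteq N_D(\bar y).\]
   Context: Tangent cone: $T_\Omega(\bar z)=\{w\mid \exists t_k\downarrow0,\ w_k\to w,\ \bar z+t_kw_k\in\Omega\}$. Regular normal cone $\widehat N_\Omega(\bar z)=\{z^\ast\mid\langle z^\ast,w\rangle\le0\ \forall w\in T_\Omega(\bar z)\}$. Limiting normal cone $N_\Omega(\bar z)=\{z^\ast\mid\exists z_k\to\bar z,\ z_k\in\Omega,\ z^\ast_k\to z^\ast,\ z_k^\ast\in\widehat N_\Omega(z_k)\}$. If $\bar z\notin\Omega$, all three cones are defined to be $\emptyset$. Higher-order tangent cones: $T^0_D(\bar y)=T_D(\bar y)$ and $T^k_D(\bar y;v_1,\dots,v_k)=T_{T^{k-1}_D(\bar y;v_1,\dots,v_{k-1})}(v_k)$ for $k\ge1$. *)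

theory Defs
  imports "HOL-Analysis.Analysis"
begin

definition tangent_cone :: "('a::real_normed_vector) set \<Rightarrow> 'a \<Rightarrow> 'a set" where
  "tangent_cone \<Omega> z = (if z \<in> \<Omega> then
     {w. \<exists>t wk. (\<forall>k. t k > (0::real)) \<and> t \<longlonglongrightarrow> 0 \<and> wk \<longlonglongrightarrow> w \<and>
                 (\<forall>k. z + t k *\<^sub>R wk k \<in> \<Omega>)}
   else {})"

definition regular_normal_cone :: "('a::real_inner) set \<Rightarrow> 'a \<Rightarrow> 'a set" where
  "regular_normal_cone \<Omega> z = (if z \<in> \<Omega> then
     {zs. \<forall>w\<in>tangent_cone \<Omega> z. zs \<bullet> w \<le> 0}
   else {})"

definition limiting_normal_cone :: "('a::real_inner) set \<Rightarrow> 'a \<Rightarrow> 'a set" where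
  "limiting_normal_cone \<Omega> z = (if z \<in> \<Omega> then
     {zs. \<exists>zk zsk. zk \<longlonglongrightarrow> z \<and> (\<forall>k. zk k \<in> \<Omega>) \<and> zsk \<longlonglongrightarrow> zs \<and>
                  (\<forall>k. zsk k \<in> regular_normal_cone \<Omega> (zk k))}
   else {})"

text \<open>Higher-order tangent cones: \<open>ho_tangent_cone D y v k\<close> is
  \<open>T^k_D(y; v 1, ..., v k)\<close>, with directions indexed from 1.\<close>
fun ho_tangent_cone :: "('a::real_normed_vector) set \<Rightarrow> 'a \<Rightarrow> (nat \<Rightarrow> 'a) \<Rightarrow> nat \<Rightarrow> 'a set" where
  "ho_tangent_cone D y v 0 = tangent_cone D y"
| "ho_tangent_cone D y v (Suc k) = tangent_cone (ho_tangent_cone D y v k) (v (Suc k))"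

end

theory Submission
  imports Defs
begin

lemma tc_iff: "w \<in> tangent_cone C x \<longleftrightarrow> x \<in> C \<and> (\<exists>t wk. (\<forall>k. t k > (0::real)) \<and> t \<longlonglongrightarrow> 0 \<and> wk \<longlonglongrightarrow> w \<and> (\<forall>k. x + t k *\<^sub>R wk k \<in> C))"
  by (simp add: tangent_cone_def)

lemma tc_base: "w \<in> tangent_cone C x \<Longrightarrow> x \<in> C"
  by (simp add: tangent_cone_def split: if_splits)

lemma rn_iff: "u \<in> regular_normal_cone C z \<longleftrightarrow> z \<in> C \<and> (\<forall>w\<in>tangent_cone C z. u \<bullet> w \<le> 0)"
  by (simp add: regular_normal_cone_def)

lemma ln_iff: "zs \<in> limiting_normal_cone C z \<longleftrightarrow> z \<in> C \<and> (\<exists>zk zsk. zk \<longlonglongrightarrow> z \<and> (\<forall>k. zk k \<in> C) \<and> zsk \<longlonglongrightarrow> zs \<and>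
                  (\<forall>k. zsk k \<in> regular_normal_cone C (zk k)))"
  by (simp add: limiting_normal_cone_def)

lemma lim_inv_suc:
  fixes X :: "nat \<Rightarrow> 'a::metric_space"
  assumes "\<And>n. dist (X n) L < 1 / real (Suc n)"
  shows "X \<longlonglongrightarrow> L"
proof (rule metric_LIMSEQ_I)
  fix r :: real assume "r > 0"
  then obtain n0 where n0: "inverse (real (Suc n0)) < r" using reals_Archimedean by blast
  show "\<exists>no. \<forall>n\<ge>no. dist (X n) L < r"
  proof (intro exI allI impI)
    fix n assume "n \<ge> n0"
    have "1 / real (Suc n) \<le> 1 / real (Suc n0)" using \<open>n \<ge> n0\<close> by (simp add: frac_le)
    then show "dist (X n) L < r" using assms[of n] n0 by (simp add: inverse_eq_divide)
  qed
qed

lemma tc_closed: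
  fixes C :: "'a::real_normed_vector set"
  shows "closed (tangent_cone C x)"
proof (cases "x \<in> C")
  case False then show ?thesis by (simp add: tangent_cone_def)
next
  case True
  show ?thesis unfolding closed_sequential_limits
  proof (intro allI impI, elim conjE)
    fix W w assume W: "\<forall>n. W n \<in> tangent_cone C x" and lim: "W \<longlonglongrightarrow> w"
    have "\<forall>n. \<exists>s v. s > 0 \<and> s < 1/real (Suc n) \<and> dist v (W n) < 1/real(Suc n) \<and> x + s *\<^sub>R v \<in> C"
    proof
      fix n
      from W[rule_format, of n] obtain t wk where t: "\<forall>k. t k > 0" "t \<longlonglongrightarrow> 0" "wk \<longlonglongrightarrow> W n" "\<forall>k. x + t k *\<^sub>R wk k \<in> C"
        by (auto simp: tc_iff)
      have e: "1/real (Suc n) > 0" by simp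
      from metric_LIMSEQ_D[OF t(2) e] obtain N1 where N1: "\<forall>k\<ge>N1. dist (t k) 0 < 1/real(Suc n)" by blast
      from metric_LIMSEQ_D[OF t(3) e] obtain N2 where N2: "\<forall>k\<ge>N2. dist (wk k) (W n) < 1/real(Suc n)" by blast
      show "\<exists>s v. s > 0 \<and> s < 1/real (Suc n) \<and> dist v (W n) < 1/real(Suc n) \<and> x + s *\<^sub>R v \<in> C"
        apply (rule exI[of _ "t (max N1 N2)"], rule exI[of _ "wk (max N1 N2)"])
        using N1[rule_format, of "max N1 N2"] N2[rule_format, of "max N1 N2"] t(1) t(4) by auto
    qed
    then obtain S V where SV: "\<forall>n. S n > 0 \<and> S n < 1/real (Suc n) \<and> dist (V n) (W n) < 1/real(Suc n) \<and> x + S n *\<^sub>R V n \<in> C"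
      by metis
    have S0: "S \<longlonglongrightarrow> 0" by (rule lim_inv_suc) (metis SV dist_real_def diff_zero abs_of_pos)
    have "(\<lambda>n. V n - W n) \<longlonglongrightarrow> 0" by (rule lim_inv_suc) (use SV in \<open>auto simp: dist_norm\<close>)
    from tendsto_add[OF lim this] have "V \<longlonglongrightarrow> w" by simp
    then show "w \<in> tangent_cone C x" using True SV S0 by (auto simp: tc_iff)
  qed
qed

lemma tc_zero: "x \<in> C \<Longrightarrow> 0 \<in> tangent_cone C x"
proof -
  assume x: "x \<in> C"
  have L: "(\<lambda>k. inverse (real (Suc k))) \<longlonglongrightarrow> 0" by (rule LIMSEQ_inverse_real_of_nat)
  show ?thesis unfolding tc_iff
    apply (intro conjI x exI[of _ "\<lambda>k. inverse (real (Suc k))"] exI[of _ "\<lambda>k. 0"])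
    using L x by auto
qed

lemma tc_scale:
  assumes "w \<in> tangent_cone C x" "(c::real) > 0"
  shows "c *\<^sub>R w \<in> tangent_cone C x"
proof -
  from assms(1) obtain t wk where t: "x \<in> C" "\<forall>k. t k > 0" "t \<longlonglongrightarrow> 0" "wk \<longlonglongrightarrow> w" "\<forall>k. x + t k *\<^sub>R wk k \<in> C"
    by (auto simp: tc_iff)
  have a: "(\<lambda>k. t k / c) \<longlonglongrightarrow> 0" using tendsto_divide_zero[OF t(3)] by simp
  have b: "(\<lambda>k. c *\<^sub>R wk k) \<longlonglongrightarrow> c *\<^sub>R w" by (intro tendsto_intros t(4))
  have "\<forall>k. x + (t k / c) *\<^sub>R (c *\<^sub>R wk k) \<in> C" using t(5) assms(2) by simp
  then show ?thesis unfolding tc_iff using t(1,2) assms(2) a b by (intro conjI exI[of _ "\<lambda>k. t k / c"] exI[of _ "\<lambda>k. c *\<^sub>R wk k"]) auto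
qed

lemma tc_tc_scale:
  assumes cone: "\<And>z c. z \<in> K \<Longrightarrow> (c::real) > 0 \<Longrightarrow> c *\<^sub>R z \<in> K"
    and c: "c > 0" and u: "u \<in> tangent_cone K w"
  shows "u \<in> tangent_cone K (c *\<^sub>R w)"
proof -
  from u obtain t wk where t: "w \<in> K" "\<forall>k. t k > 0" "t \<longlonglongrightarrow> 0" "wk \<longlonglongrightarrow> u" "\<forall>k. w + t k *\<^sub>R wk k \<in> K"
    by (auto simp: tc_iff)
  have a: "(\<lambda>k. c * t k) \<longlonglongrightarrow> 0" using tendsto_mult_right_zero[OF t(3)] by simp
  have "\<forall>k. c *\<^sub>R w + (c * t k) *\<^sub>R wk k \<in> K"
  proof
    fix k
    have "c *\<^sub>R (w + t k *\<^sub>R wk k) \<in> K" using cone[OF _ c] t(5) by blast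
    then show "c *\<^sub>R w + (c * t k) *\<^sub>R wk k \<in> K" by (simp add: scaleR_add_right)
  qed
  then show ?thesis unfolding tc_iff using cone[OF t(1) c] t(2,4) c a
    by (intro conjI exI[of _ "\<lambda>k. c * t k"] exI[of _ wk]) auto
qed

lemma rn_scale:
  assumes cone: "\<And>z c. z \<in> K \<Longrightarrow> (c::real) > 0 \<Longrightarrow> c *\<^sub>R z \<in> K"
    and c: "c > 0" and v: "v \<in> regular_normal_cone K w"
  shows "v \<in> regular_normal_cone K (c *\<^sub>R w)"
proof -
  have w: "w \<in> K" using v by (simp add: rn_iff)
  have "u \<in> tangent_cone K w" if "u \<in> tangent_cone K (c *\<^sub>R w)" for u
    using tc_tc_scale[OF cone, of "inverse c" u "c *\<^sub>R w"] that c by simp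
  then show ?thesis using v cone[OF w c] by (auto simp: rn_iff)
qed

lemma ln_intro:
  assumes x: "x \<in> C"
    and H: "\<And>e. e > 0 \<Longrightarrow> \<exists>x'\<in>C. dist x' x < e \<and> (\<exists>u\<in>regular_normal_cone C x'. dist u v < e)"
  shows "v \<in> limiting_normal_cone C x"
proof -
  have "\<forall>n. \<exists>x' u. x' \<in> C \<and> dist x' x < 1/real (Suc n) \<and> u \<in> regular_normal_cone C x' \<and> dist u v < 1/real (Suc n)"
    using H[of "1/real (Suc _)"] by fastforce
  then obtain X U where XU: "\<forall>n. X n \<in> C \<and> dist (X n) x < 1/real (Suc n) \<and> U n \<in> regular_normal_cone C (X n) \<and> dist (U n) v < 1/real (Suc n)"
    by metis
  have "X \<longlonglongrightarrow> x" by (rule lim_inv_suc) (use XU in blast)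
  moreover have "U \<longlonglongrightarrow> v" by (rule lim_inv_suc) (use XU in blast)
  ultimately show ?thesis unfolding ln_iff using x XU by blast
qed

lemma ln_elim:
  assumes v: "v \<in> limiting_normal_cone C x" and e: "e > 0"
  shows "\<exists>x'\<in>C. dist x' x < e \<and> (\<exists>u\<in>regular_normal_cone C x'. dist u v < e)"
proof -
  from v obtain zk zsk where z: "zk \<longlonglongrightarrow> x" "\<forall>k. zk k \<in> C" "zsk \<longlonglongrightarrow> v" "\<forall>k. zsk k \<in> regular_normal_cone C (zk k)"
    by (auto simp: ln_iff)
  from metric_LIMSEQ_D[OF z(1) e] obtain N1 where N1: "\<forall>k\<ge>N1. dist (zk k) x < e" by blast
  from metric_LIMSEQ_D[OF z(3) e] obtain N2 where N2: "\<forall>k\<ge>N2. dist (zsk k) v < e" by blast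
  show ?thesis using N1[rule_format, of "max N1 N2"] N2[rule_format, of "max N1 N2"] z(2,4) by auto
qed

lemma rn_sub_ln: "regular_normal_cone C x \<subseteq> limiting_normal_cone C x"
proof
  fix v assume v: "v \<in> regular_normal_cone C x"
  then have "x \<in> C" by (simp add: rn_iff)
  then show "v \<in> limiting_normal_cone C x" unfolding ln_iff using v
    by (intro conjI exI[of _ "\<lambda>k. x"] exI[of _ "\<lambda>k. v"]) auto
qed

lemma ln_cone:
  assumes v: "v \<in> limiting_normal_cone (tangent_cone C x) w"
  shows "v \<in> limiting_normal_cone (tangent_cone C x) 0"
proof -
  let ?K = "tangent_cone C x"
  have cone: "\<And>z c. z \<in> ?K \<Longrightarrow> (c::real) > 0 \<Longrightarrow> c *\<^sub>R z \<in> ?K" by (rule tc_scale)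
  from v obtain zk zsk where z: "w \<in> ?K" "zk \<longlonglongrightarrow> w" "\<forall>k. zk k \<in> ?K" "zsk \<longlonglongrightarrow> v" "\<forall>k. zsk k \<in> regular_normal_cone ?K (zk k)"
    by (auto simp: ln_iff)
  have x: "x \<in> C" using z(1) by (rule tc_base)
  have lim: "(\<lambda>k. inverse (real (Suc k)) *\<^sub>R zk k) \<longlonglongrightarrow> 0"
    using tendsto_scaleR[OF LIMSEQ_inverse_real_of_nat z(2)] by simp
  have "\<forall>k. inverse (real (Suc k)) *\<^sub>R zk k \<in> ?K" using cone z(3) by simp
  moreover have "\<forall>k. zsk k \<in> regular_normal_cone ?K (inverse (real (Suc k)) *\<^sub>R zk k)"
    using rn_scale[OF cone] z(5) by simp
  ultimately show ?thesis unfolding ln_iff using tc_zero[OF x] lim z(4) by blast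
qed

lemma proximal:
  fixes C :: "'a::real_inner set"
  assumes z: "z \<in> C" and near: "\<forall>c\<in>C. dist a z \<le> dist a c" and mu: "(\<mu>::real) \<ge> 0"
  shows "\<mu> *\<^sub>R (a - z) \<in> regular_normal_cone C z"
proof -
  have "\<mu> *\<^sub>R (a - z) \<bullet> u \<le> 0" if u: "u \<in> tangent_cone C z" for u
  proof -
    from u obtain t wk where t: "\<forall>k. t k > 0" "t \<longlonglongrightarrow> 0" "wk \<longlonglongrightarrow> u" "\<forall>k. z + t k *\<^sub>R wk k \<in> C"
      by (auto simp: tc_iff)
    define d where "d = a - z"
    have ineq: "d \<bullet> wk k \<le> t k * (wk k \<bullet> wk k) / 2" for k
    proof -
      have "dist a z \<le> dist a (z + t k *\<^sub>R wk k)" using near t(4) by blast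
      then have "norm d \<le> norm (d - t k *\<^sub>R wk k)" by (simp add: d_def dist_norm algebra_simps)
      then have "(norm d)\<^sup>2 \<le> (norm (d - t k *\<^sub>R wk k))\<^sup>2" by (simp add: power_mono)
      then have "t k * (d \<bullet> wk k) + t k * (wk k \<bullet> d) \<le> t k * (t k * (wk k \<bullet> wk k))"
        by (simp add: power2_norm_eq_inner inner_diff_left inner_diff_right algebra_simps)
      moreover have "wk k \<bullet> d = d \<bullet> wk k" by (rule inner_commute)
      ultimately have "0 \<le> t k * (t k * (wk k \<bullet> wk k)) - 2 * t k * (d \<bullet> wk k)" by simp
      then have "2 * t k * (d \<bullet> wk k) \<le> t k * (t k * (wk k \<bullet> wk k))" by linarith
      then have "2 * (d \<bullet> wk k) \<le> t k * (wk k \<bullet> wk k)" using t(1) by (simp add: mult_le_cancel_left)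
      then show ?thesis by simp
    qed
    have l1: "(\<lambda>k. d \<bullet> wk k) \<longlonglongrightarrow> d \<bullet> u" by (intro tendsto_intros t(3))
    have l2: "(\<lambda>k. t k * (wk k \<bullet> wk k) / 2) \<longlonglongrightarrow> 0 * (u \<bullet> u) / 2" by (intro tendsto_intros t) auto
    have "d \<bullet> u \<le> 0" using tendsto_le[OF trivial_limit_sequentially l2 l1] ineq by simp
    then show ?thesis using mu by (simp add: d_def mult_nonneg_nonpos)
  qed
  then show ?thesis using z by (simp add: rn_iff)
qed

lemma rn_estimate:
  fixes K :: "'a::euclidean_space set"
  assumes v: "v \<in> regular_normal_cone K w" and e: "e > 0"
  shows "\<exists>\<rho>>0. \<forall>q\<in>K. norm (q - w) < \<rho> \<longrightarrow> v \<bullet> (q - w) \<le> e * norm (q - w)"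
proof (rule ccontr)
  assume "\<not> ?thesis"
  then have "\<forall>n. \<exists>q. q \<in> K \<and> norm (q - w) < 1/real (Suc n) \<and> v \<bullet> (q - w) > e * norm (q - w)"
    by (metis not_le of_nat_0_less_iff zero_less_Suc zero_less_divide_1_iff)
  then obtain Q where Q: "\<forall>n. Q n \<in> K \<and> norm (Q n - w) < 1/real (Suc n) \<and> v \<bullet> (Q n - w) > e * norm (Q n - w)"
    by metis
  have w: "w \<in> K" using v by (simp add: rn_iff)
  have Qne: "norm (Q n - w) > 0" for n
  proof (rule ccontr)
    assume "\<not> norm (Q n - w) > 0"
    then have "Q n - w = 0" by simp
    then show False using Q by (metis inner_zero_right mult_zero_right norm_zero order_less_irrefl)
  qed
  define U where "U n = (1 / norm (Q n - w)) *\<^sub>R (Q n - w)" for n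
  have nU: "norm (U n) = 1" for n using Qne[of n] by (simp add: U_def)
  have vU: "v \<bullet> U n \<ge> e" for n
  proof -
    have "v \<bullet> U n = (v \<bullet> (Q n - w)) / norm (Q n - w)" by (simp add: U_def)
    moreover have "e * norm (Q n - w) < v \<bullet> (Q n - w)" using Q by blast
    ultimately show ?thesis using Qne[of n] by (simp add: pos_le_divide_eq)
  qed
  have "bounded (range U)" unfolding bounded_iff using nU by auto
  then obtain l r where r: "strict_mono r" "(U \<circ> r) \<longlonglongrightarrow> l" using bounded_imp_convergent_subsequence by blast
  have "(\<lambda>n. v \<bullet> (U \<circ> r) n) \<longlonglongrightarrow> v \<bullet> l" by (intro tendsto_intros r(2))
  then have vl: "v \<bullet> l \<ge> e" using vU by (intro tendsto_lowerbound) (auto simp: o_def)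
  have tl: "(\<lambda>n. norm (Q (r n) - w)) \<longlonglongrightarrow> 0"
  proof (rule lim_inv_suc)
    fix n
    have "norm (Q (r n) - w) < 1/real (Suc (r n))" using Q by blast
    also have "\<dots> \<le> 1/real (Suc n)" using seq_suble[OF r(1), of n] by (simp add: frac_le)
    finally show "dist (norm (Q (r n) - w)) 0 < 1/real (Suc n)" by simp
  qed
  have "\<forall>n. w + norm (Q (r n) - w) *\<^sub>R (U \<circ> r) n \<in> K" using Q Qne by (simp add: U_def)
  then have "l \<in> tangent_cone K w" unfolding tc_iff using w Qne tl r(2)
    by (intro conjI exI[of _ "\<lambda>n. norm (Q (r n) - w)"] exI[of _ "U \<circ> r"]) auto
  then have "v \<bullet> l \<le> 0" using v by (simp add: rn_iff)
  then show False using vl e by simp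
qed

lemma arith_aux:
  fixes a n b c d m :: real
  assumes "a \<le> n" "m = n" "d = c" "d = (m + b - a) / 2"
  shows "b \<le> 2 * c"
  using assms by (simp add: field_simps)

lemma key:
  fixes C :: "'a::euclidean_space set"
  assumes clC: "closed C" and w: "w \<in> tangent_cone C x"
    and v: "v \<in> regular_normal_cone (tangent_cone C x) w" and e: "e > 0"
  shows "\<exists>x'\<in>C. dist x' x < e \<and> (\<exists>u\<in>regular_normal_cone C x'. dist u v < e)"
proof -
  let ?T = "tangent_cone C x"
  define \<eta> where "\<eta> = e / 2"
  have \<eta>: "\<eta> > 0" "\<eta> < e" using e by (auto simp: \<eta>_def)
  obtain \<rho> where \<rho>: "\<rho> > 0" "\<forall>q\<in>?T. norm (q - w) < \<rho> \<longrightarrow> v \<bullet> (q - w) \<le> (\<eta>/4) * norm (q - w)"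
    using rn_estimate[OF v, of "\<eta>/4"] \<eta> by auto
  define \<delta> where "\<delta> = \<rho> / (4 * (norm v + 1))"
  have \<delta>0: "\<delta> > 0" unfolding \<delta>_def using \<rho>(1) by (intro divide_pos_pos) (auto intro: add_nonneg_pos)
  have nz: "4 * (norm v + 1) > 0" by (smt (verit) norm_ge_zero)
  have eq: "4 * (norm v + 1) * \<delta> = \<rho>" using nz by (simp add: \<delta>_def)
  have "\<delta> * norm v \<ge> 0" using \<delta>0 by simp
  moreover have "\<rho> = 4 * (\<delta> * norm v) + 4 * \<delta>" using eq by (simp add: algebra_simps)
  ultimately have \<delta>1: "2 * \<delta> * norm v < \<rho>" using \<delta>0 by linarith
  define p where "p = w + \<delta> *\<^sub>R v"
  from w obtain t wk where t: "\<forall>k. t k > 0" "t \<longlonglongrightarrow> 0" "wk \<longlonglongrightarrow> w" "\<forall>k. x + t k *\<^sub>R wk k \<in> C"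
    by (auto simp: tc_iff)
  have "\<forall>k. \<exists>z. z \<in> C \<and> (\<forall>c\<in>C. dist (x + t k *\<^sub>R p) z \<le> dist (x + t k *\<^sub>R p) c)"
  proof
    fix k
    have "C \<noteq> {}" using t(4) by blast
    from distance_attains_inf[OF clC this, of "x + t k *\<^sub>R p"] show "\<exists>z. z \<in> C \<and> (\<forall>c\<in>C. dist (x + t k *\<^sub>R p) z \<le> dist (x + t k *\<^sub>R p) c)"
      by metis
  qed
  then obtain Z where Z: "\<forall>k. Z k \<in> C \<and> (\<forall>c\<in>C. dist (x + t k *\<^sub>R p) (Z k) \<le> dist (x + t k *\<^sub>R p) c)"
    by metis
  define q where "q k = (1 / t k) *\<^sub>R (Z k - x)" for k
  have Zq: "Z k = x + t k *\<^sub>R q k" for k using t(1)[rule_format, of k] by (simp add: q_def)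
  have pq: "norm (p - q k) \<le> norm (p - wk k)" for k
  proof -
    have "dist (x + t k *\<^sub>R p) (Z k) \<le> dist (x + t k *\<^sub>R p) (x + t k *\<^sub>R wk k)" using Z t(4) by blast
    then have "norm (t k *\<^sub>R (p - q k)) \<le> norm (t k *\<^sub>R (p - wk k))"
      by (simp add: Zq dist_norm algebra_simps)
    then show ?thesis using t(1)[rule_format, of k] by simp
  qed
  have ex: "\<exists>k. t k * (norm p + norm (p - wk k)) < e \<and> norm (q k - w) \<le> \<delta> * \<eta>"
  proof (rule ccontr)
    assume nex: "\<not> ?thesis"
    have "(\<lambda>k. t k * (norm p + norm (p - wk k))) \<longlonglongrightarrow> 0 * (norm p + norm (p - w))"
      by (intro tendsto_intros t)
    then have ev1: "eventually (\<lambda>k. t k * (norm p + norm (p - wk k)) < e) sequentially"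
      using order_tendstoD(2) e by fastforce
    have ev2: "eventually (\<lambda>k. norm (q k - w) \<ge> \<delta> * \<eta>) sequentially"
      using ev1 nex by (elim eventually_mono) auto
    obtain B where B: "\<forall>k. norm (wk k) \<le> B"
      using convergent_imp_bounded[OF t(3)] unfolding bounded_iff by auto
    have "norm (q k) \<le> 2 * norm p + B" for k
    proof -
      have "norm (q k) \<le> norm p + norm (p - q k)" using norm_triangle_sub[of "q k" p] by (simp add: norm_minus_commute)
      also have "\<dots> \<le> norm p + norm (p - wk k)" using pq[of k] by simp
      also have "\<dots> \<le> norm p + (norm p + norm (wk k))" using norm_triangle_ineq4[of p "wk k"] by simp
      finally show ?thesis using B[rule_format, of k] by linarith
    qed
    then have "bounded (range q)" unfolding bounded_iff by auto
    then obtain l r where r: "strict_mono r" "(q \<circ> r) \<longlonglongrightarrow> l" using bounded_imp_convergent_subsequence by blast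
    have tr: "(t \<circ> r) \<longlonglongrightarrow> 0" using LIMSEQ_subseq_LIMSEQ[OF t(2) r(1)] .
    have wr: "(wk \<circ> r) \<longlonglongrightarrow> w" using LIMSEQ_subseq_LIMSEQ[OF t(3) r(1)] .
    have "\<forall>k. x + (t \<circ> r) k *\<^sub>R (q \<circ> r) k \<in> C" using Z by (simp add: Zq[symmetric])
    then have lT: "l \<in> ?T" unfolding tc_iff using tc_base[OF w] t(1) tr r(2)
      by (intro conjI exI[of _ "t \<circ> r"] exI[of _ "q \<circ> r"]) auto
    have a1: "(\<lambda>k. norm (p - (q \<circ> r) k)) \<longlonglongrightarrow> norm (p - l)" by (intro tendsto_intros r(2))
    have a2: "(\<lambda>k. norm (p - (wk \<circ> r) k)) \<longlonglongrightarrow> norm (p - w)" by (intro tendsto_intros wr)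
    have pl: "norm (p - l) \<le> norm (p - w)"
      using tendsto_le[OF trivial_limit_sequentially a2 a1] pq by simp
    have pw: "norm (p - w) = \<delta> * norm v" using \<delta>0 by (simp add: p_def)
    have a3: "(\<lambda>k. norm ((q \<circ> r) k - w)) \<longlonglongrightarrow> norm (l - w)" by (intro tendsto_intros r(2))
    have ge: "norm (l - w) \<ge> \<delta> * \<eta>"
      using eventually_subseq[OF r(1) ev2] by (intro tendsto_lowerbound[OF a3]) (auto simp: o_def)
    have "norm (l - w) \<le> norm (l - p) + norm (p - w)" using norm_triangle_ineq[of "l - p" "p - w"] by simp
    also have "\<dots> \<le> 2 * \<delta> * norm v" using pl pw by (simp add: norm_minus_commute)
    finally have "norm (l - w) < \<rho>" using \<delta>1 by simp
    then have est: "v \<bullet> (l - w) \<le> (\<eta>/4) * norm (l - w)" using \<rho>(2) lT by blast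
    have "(norm (p - l))\<^sup>2 \<le> (\<delta> * norm v)\<^sup>2" using pl pw by (simp add: power_mono)
    moreover have "p - l = \<delta> *\<^sub>R v - (l - w)" by (simp add: p_def)
    ultimately have "(norm (\<delta> *\<^sub>R v - (l - w)))\<^sup>2 \<le> (\<delta> * norm v)\<^sup>2" by simp
    moreover have "(norm (\<delta> *\<^sub>R v))\<^sup>2 = (\<delta> * norm v)\<^sup>2" using \<delta>0 by simp
    moreover have "(\<delta> *\<^sub>R v) \<bullet> (l - w) = \<delta> * (v \<bullet> (l - w))" by simp
    moreover have "(\<delta> *\<^sub>R v) \<bullet> (l - w) = (((norm (\<delta> *\<^sub>R v))\<^sup>2 + (norm (l - w))\<^sup>2) - (norm (\<delta> *\<^sub>R v - (l - w)))\<^sup>2) / 2"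
      by (rule dot_norm_neg)
    ultimately have "(norm (l - w))\<^sup>2 \<le> 2 * (\<delta> * (v \<bullet> (l - w)))" by (rule arith_aux)
    also have "\<dots> \<le> 2 * (\<delta> * ((\<eta>/4) * norm (l - w)))" using est \<delta>0 by simp
    finally have "norm (l - w) * norm (l - w) \<le> (\<delta> * \<eta> / 2) * norm (l - w)" by (simp add: power2_eq_square algebra_simps)
    moreover have "norm (l - w) > 0" using ge \<delta>0 \<eta> by (smt (verit) mult_pos_pos)
    ultimately have "norm (l - w) \<le> \<delta> * \<eta> / 2" by simp
    moreover have "\<delta> * \<eta> > 0" using \<delta>0 \<eta> by simp
    ultimately show False using ge by linarith
  qed
  then obtain k where k: "t k * (norm p + norm (p - wk k)) < e" "norm (q k - w) \<le> \<delta> * \<eta>" by blast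
  define u where "u = (1 / (\<delta> * t k)) *\<^sub>R ((x + t k *\<^sub>R p) - Z k)"
  have uN: "u \<in> regular_normal_cone C (Z k)" unfolding u_def
    using proximal[of "Z k" C "x + t k *\<^sub>R p" "1 / (\<delta> * t k)"] Z \<delta>0 t(1)[rule_format, of k] by simp
  have "u = (1 / \<delta>) *\<^sub>R (p - q k)" using t(1)[rule_format, of k] \<delta>0
    by (simp add: u_def Zq algebra_simps)
  then have "u - v = (1 / \<delta>) *\<^sub>R (w - q k)" using \<delta>0 by (simp add: p_def algebra_simps)
  then have "dist u v = norm (q k - w) / \<delta>" using \<delta>0 by (simp add: dist_norm norm_minus_commute)
  also have "\<dots> \<le> \<eta>" using k(2) \<delta>0 by (simp add: divide_le_eq mult.commute)
  finally have du: "dist u v < e" using \<eta> by simp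
  have "dist (Z k) x = t k * norm (q k)" using t(1)[rule_format, of k] by (simp add: Zq dist_norm)
  also have "\<dots> \<le> t k * (norm p + norm (p - wk k))"
  proof -
    have "norm (q k) \<le> norm p + norm (p - q k)" using norm_triangle_sub[of "q k" p] by (simp add: norm_minus_commute)
    then have "norm (q k) \<le> norm p + norm (p - wk k)" using pq[of k] by simp
    then show ?thesis using t(1)[rule_format, of k] by simp
  qed
  finally have "dist (Z k) x < e" using k(1) by simp
  then show ?thesis using Z uN du by blast
qed


lemma lnA:
  fixes C :: "'a::euclidean_space set"
  assumes clC: "closed C" and v: "v \<in> limiting_normal_cone (tangent_cone C x) w"
  shows "v \<in> limiting_normal_cone C x"
proof -
  have "w \<in> tangent_cone C x" using v by (simp add: ln_iff)
  then have x: "x \<in> C" by (rule tc_base)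
  show ?thesis
  proof (rule ln_intro[OF x])
    fix e :: real assume e: "e > 0"
    then obtain w' u where w': "w' \<in> tangent_cone C x" "u \<in> regular_normal_cone (tangent_cone C x) w'" "dist u v < e/2"
      using ln_elim[OF v, of "e/2"] by auto
    obtain x' u' where x': "x' \<in> C" "dist x' x < e/2" "u' \<in> regular_normal_cone C x'" "dist u' u < e/2"
      using key[OF clC w'(1) w'(2), of "e/2"] e by auto
    have "dist u' v < e" using dist_triangle[of u' v u] x'(4) w'(3) by linarith
    moreover have "dist x' x < e" using x'(2) e by linarith
    ultimately show "\<exists>x'\<in>C. dist x' x < e \<and> (\<exists>u\<in>regular_normal_cone C x'. dist u v < e)"
      using x' by blast
  qed
qed

lemma ho_closed: "closed (ho_tangent_cone D y v k)"
  by (cases k) (simp_all add: tc_closed)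

lemma chain:
  fixes D :: "'a::euclidean_space set"
  shows "limiting_normal_cone (ho_tangent_cone D y v k) (v (Suc k)) \<subseteq> limiting_normal_cone (ho_tangent_cone D y v 0) (v 1)"
proof (induction k)
  case 0 show ?case by simp
next
  case (Suc k)
  have "limiting_normal_cone (ho_tangent_cone D y v (Suc k)) (v (Suc (Suc k))) \<subseteq> limiting_normal_cone (ho_tangent_cone D y v k) (v (Suc k))"
    using lnA[OF ho_closed[of D y v k]] by auto
  then show ?case using Suc.IH by blast
qed

theorem lemma4p3:
  fixes D :: "(real ^ 's) set" and y :: "real ^ 's"
    and v :: "nat \<Rightarrow> real ^ 's" and l :: nat
  assumes "closed D" and "y \<in> D" and "l \<ge> 1"
  shows "regular_normal_cone (ho_tangent_cone D y v (l - 1)) (v l)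
           \<subseteq> limiting_normal_cone (ho_tangent_cone D y v (l - 1)) (v l)
       \<and> limiting_normal_cone (ho_tangent_cone D y v (l - 1)) (v l)
           \<subseteq> limiting_normal_cone (tangent_cone D y) 0
       \<and> limiting_normal_cone (tangent_cone D y) 0 \<subseteq> limiting_normal_cone D y"
proof (intro conjI)
  obtain k where k: "l = Suc k" using assms(3) by (cases l) auto
  show "regular_normal_cone (ho_tangent_cone D y v (l - 1)) (v l)
           \<subseteq> limiting_normal_cone (ho_tangent_cone D y v (l - 1)) (v l)" by (rule rn_sub_ln)
  show "limiting_normal_cone (ho_tangent_cone D y v (l - 1)) (v l)
           \<subseteq> limiting_normal_cone (tangent_cone D y) 0"
  proof
    fix u assume "u \<in> limiting_normal_cone (ho_tangent_cone D y v (l - 1)) (v l)"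
    then have "u \<in> limiting_normal_cone (tangent_cone D y) (v 1)" using chain[of D y v k] k by auto
    then show "u \<in> limiting_normal_cone (tangent_cone D y) 0" by (rule ln_cone)
  qed
  show "limiting_normal_cone (tangent_cone D y) 0 \<subseteq> limiting_normal_cone D y"
    using lnA[OF assms(1)] by blast
qed

end
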